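(* Let $K$ be a field of characteristic zero, $L_n=K[x_1^{\pm1},\ldots,x_n^{\pm1}]$, $W_n=\mathrm{Der}_K(L_n)$ and $\sigma\in\mathrm{Aut}_{\mathrm{Lie}}(W_n)$. Then there is $A\in\mathrm{GL}_n(\mathbb{Z})$ with $\sigma(H)=AH$, and $\sigma_A\sigma$ fixes each of $H_1,\ldots,H_n$, where $\sigma_A\in\mathrm{Aut}_{K\text{-alg}}(L_n)$, $\sigma_A(x_i)=\prod_jx_j^{a_{ji}}$, acts on $W_n$ by $\delta\mapsto\sigma_A\delta\sigma_A^{-1}$.
   Context: $H_i=x_i\partial_i$, $H=(H_1,\ldots,H_n)^T$, and $\sigma(H)=AH$ means $\sigma(H_i)=\sum_ja_{ij}H_j$ for all $i$, where $A=(a_{ij})$. *)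

theory Defs
  imports "HOL-Analysis.Analysis" "HOL-Library.Poly_Mapping"
begin

text \<open>Laurent polynomial ring L_n = K[x_1^{+-1},...,x_n^{+-1}], realised as the group algebra
  of Z^n: finitely supported maps from exponent vectors (int^'n) to K.
  The number n of variables is CARD('n).\<close>
type_synonym ('k,'n) laurent = "(int^'n) \<Rightarrow>\<^sub>0 'k"

definition lconst :: "'k::comm_ring_1 \<Rightarrow> ('k,'n::finite) laurent" where
  "lconst c = Poly_Mapping.single 0 c"

definition lvar :: "'n::finite \<Rightarrow> ('k::comm_ring_1,'n) laurent" where
  "lvar i = Poly_Mapping.single (axis i 1) 1"

definition lvar_inv :: "'n::finite \<Rightarrow> ('k::comm_ring_1,'n) laurent" where
  "lvar_inv i = Poly_Mapping.single (axis i (-1)) 1"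

definition lvar_pow :: "'n::finite \<Rightarrow> int \<Rightarrow> ('k::comm_ring_1,'n) laurent" where
  "lvar_pow i k = (if k \<ge> 0 then lvar i ^ nat k else lvar_inv i ^ nat (- k))"

text \<open>partial derivative d_i, with d_i(x^a) = a_i x^(a - e_i), and H_i = x_i d_i\<close>
definition lpartial :: "'n::finite \<Rightarrow> ('k::comm_ring_1,'n) laurent \<Rightarrow> ('k,'n) laurent" where
  "lpartial i f = lvar_inv i * Poly_Mapping.mapp (\<lambda>a c. of_int (a $ i) * c) f"

definition H :: "'n::finite \<Rightarrow> ('k::comm_ring_1,'n) laurent \<Rightarrow> ('k,'n) laurent" where
  "H i f = lvar i * lpartial i f"

definition Der :: "(('k::comm_ring_1,'n::finite) laurent \<Rightarrow> ('k,'n) laurent) set" where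
  "Der = {D. (\<forall>f g. D (f + g) = D f + D g) \<and> (\<forall>c f. D (lconst c * f) = lconst c * D f)
            \<and> (\<forall>f g. D (f * g) = f * D g + g * D f)}"

definition lie_bracket :: "('a::ring \<Rightarrow> 'a) \<Rightarrow> ('a \<Rightarrow> 'a) \<Rightarrow> ('a \<Rightarrow> 'a)" where
  "lie_bracket D E = (\<lambda>f. D (E f) - E (D f))"

text \<open>K-linear Lie algebra automorphisms of W_n (sigma is only relevant on Der)\<close>
definition lie_aut ::
  "((('k::comm_ring_1,'n::finite) laurent \<Rightarrow> ('k,'n) laurent) \<Rightarrow> (('k,'n) laurent \<Rightarrow> ('k,'n) laurent)) \<Rightarrow> bool" where
  "lie_aut \<sigma> \<longleftrightarrow> bij_betw \<sigma> Der Der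
     \<and> (\<forall>D\<in>Der. \<forall>E\<in>Der. \<sigma> (\<lambda>f. D f + E f) = (\<lambda>f. \<sigma> D f + \<sigma> E f))
     \<and> (\<forall>D\<in>Der. \<forall>c. \<sigma> (\<lambda>f. lconst c * D f) = (\<lambda>f. lconst c * \<sigma> D f))
     \<and> (\<forall>D\<in>Der. \<forall>E\<in>Der. \<sigma> (lie_bracket D E) = lie_bracket (\<sigma> D) (\<sigma> E))"

definition kalg_aut :: "(('k::comm_ring_1,'n::finite) laurent \<Rightarrow> ('k,'n) laurent) \<Rightarrow> bool" where
  "kalg_aut \<phi> \<longleftrightarrow> bij \<phi> \<and> (\<forall>f g. \<phi> (f + g) = \<phi> f + \<phi> g) \<and> (\<forall>f g. \<phi> (f * g) = \<phi> f * \<phi> g)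
     \<and> \<phi> 1 = 1 \<and> (\<forall>c f. \<phi> (lconst c * f) = lconst c * \<phi> f)"

definition is_sigmaA :: "int^'n^'n \<Rightarrow> (('k::comm_ring_1,'n::finite) laurent \<Rightarrow> ('k,'n) laurent) \<Rightarrow> bool" where
  "is_sigmaA A \<phi> \<longleftrightarrow> kalg_aut \<phi> \<and> (\<forall>i. \<phi> (lvar i) = (\<Prod>j\<in>UNIV. lvar_pow j (A $ j $ i)))"

definition conj_act :: "('a \<Rightarrow> 'a) \<Rightarrow> ('a \<Rightarrow> 'a) \<Rightarrow> ('a \<Rightarrow> 'a)" where
  "conj_act \<phi> D = \<phi> \<circ> D \<circ> inv \<phi>"

end

theory Submission
  imports Defs "HOL-Computational_Algebra.Polynomial"
begin

abbreviation sgl :: "'a \<Rightarrow> 'b \<Rightarrow> 'a \<Rightarrow>\<^sub>0 'b::zero" where "sgl \<equiv> Poly_Mapping.single"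
abbreviation lk :: "('a \<Rightarrow>\<^sub>0 'b::zero) \<Rightarrow> 'a \<Rightarrow> 'b" where "lk \<equiv> poly_mapping.lookup"
abbreviation kys :: "('a \<Rightarrow>\<^sub>0 'b::zero) \<Rightarrow> 'a set" where "kys \<equiv> Poly_Mapping.keys"

lemma pm_expand: "(f::'a \<Rightarrow>\<^sub>0 'b::comm_monoid_add) = (\<Sum>b\<in>kys f. sgl b (lk f b))"
  by (rule poly_mapping_eqI) (simp add: lookup_sum lookup_single when_def in_keys_iff)

lemma pm_expand_sup: assumes "finite S" "kys f \<subseteq> S"
  shows "(f::'a \<Rightarrow>\<^sub>0 'b::comm_monoid_add) = (\<Sum>b\<in>S. sgl b (lk f b))"
  apply (rule poly_mapping_eqI)
  using assms by (auto simp add: lookup_sum lookup_single when_def in_keys_iff)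

lemma pm_induct[case_names single add]:
  fixes f :: "'a \<Rightarrow>\<^sub>0 'b::comm_monoid_add"
  assumes s: "\<And>b c. P (sgl b c)" and a: "\<And>f g. P f \<Longrightarrow> P g \<Longrightarrow> P (f + g)"
  shows "P f"
proof -
  have "P (\<Sum>b\<in>S. sgl b (lk f b))" if "finite S" for S
    using that
  proof (induction S rule: finite_induct)
    case empty then show ?case using s[of undefined 0] by simp
  next
    case (insert x F) then show ?case by (simp add: a s)
  qed
  then show ?thesis by (metis pm_expand finite_keys)
qed

lemma sum_single: "(\<Sum>x\<in>S. sgl k (f x)) = sgl k (\<Sum>x\<in>S. f x)"
  by (induction S rule: infinite_finite_induct) (auto simp: single_add)

lemma lconst_mult_single: "lconst c * sgl b d = sgl b (c * d)"
  by (simp add: lconst_def mult_single)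

lemma lk_lconst_mult: "lk (lconst c * f) b = c * lk f b"
  by (simp add: lconst_def mult_map_scale_conv_mult[symmetric] map.rep_eq when_def)

lemma lconst_add: "lconst (a + b) = lconst a + lconst b"
  by (simp add: lconst_def single_add)
lemma lconst_mult: "lconst (a * b) = lconst a * lconst b"
  by (simp add: lconst_def mult_single)
lemma lconst_sum: "lconst (\<Sum>x\<in>S. f x) = (\<Sum>x\<in>S. lconst (f x))"
  by (simp add: lconst_def sum_single)
lemma lconst_0[simp]: "lconst 0 = 0" by (simp add: lconst_def)
lemma lconst_1[simp]: "lconst 1 = 1" by (simp add: lconst_def)
lemma of_int_lconst: "(of_int z :: ('k::comm_ring_1,'n::finite) laurent) = lconst (of_int z)"
  by (simp add: lconst_def)

lemma lvar_inv_mult: "lvar i * lvar_inv i = (1::('k::comm_ring_1,'n::finite) laurent)"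
proof -
  have "axis i (1::int) + axis i (-1) = 0" by (simp add: axis_def vec_eq_iff)
  then show ?thesis by (simp add: lvar_def lvar_inv_def mult_single)
qed

lemma H_eq: "H i f = Poly_Mapping.mapp (\<lambda>a c. of_int (a $ i) * c) (f::('k::comm_ring_1,'n::finite) laurent)"
  unfolding H_def lpartial_def mult.assoc[symmetric] lvar_inv_mult by simp

lemma lk_H: "lk (H i f) b = of_int (b $ i) * lk f b"
  by (simp add: H_eq lookup_mapp when_def in_keys_iff)

lemma H_single: "H i (sgl b c) = sgl b (of_int (b $ i) * c)"
  by (rule poly_mapping_eqI) (simp add: lk_H lookup_single when_def)

lemma H_add: "H i (f + g) = H i f + H i g"
  by (rule poly_mapping_eqI) (simp add: lk_H lookup_add algebra_simps)

lemma H_mult: "H i (f * g) = f * H i g + g * H i (f::('k::comm_ring_1,'n::finite) laurent)"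
proof (induction f rule: pm_induct)
  case (single b c)
  show ?case
  proof (induction g rule: pm_induct)
    case (single b' c')
    have "of_int ((b + b') $ i) * (c * c') = c * (of_int (b' $ i) * c') + c' * (of_int (b $ i) * c)"
      by (simp add: algebra_simps)
    then show ?case by (simp add: mult_single H_single single_add[symmetric] add.commute[of b' b])
  next
    case (add f g)
    then show ?case by (simp add: H_add distrib_left distrib_right)
  qed
next
  case (add f1 f2)
  then show ?case by (simp add: H_add distrib_left distrib_right)
qed

lemma H_lconst_mult: "H i (lconst c * f) = lconst c * H i f"
  by (simp add: H_mult lconst_def H_single)

type_synonym ('k,'n) LL = "('k,'n) laurent \<Rightarrow> ('k,'n) laurent"

definition Dv :: "('n::finite \<Rightarrow> ('k::comm_ring_1,'n) laurent) \<Rightarrow> ('k,'n) LL" where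
  "Dv g f = (\<Sum>j\<in>UNIV. g j * H j f)"

context
  fixes D :: "('k::field_char_0,'n::finite) LL"
  assumes D: "D \<in> Der"
begin

lemma Der_add: "D (f + g) = D f + D g" using D by (auto simp: Der_def)
lemma Der_lconst: "D (lconst c * f) = lconst c * D f" using D by (auto simp: Der_def)
lemma Der_mult: "D (f * g) = f * D g + g * D f" using D by (auto simp: Der_def)
lemma Der_0: "D 0 = 0" using Der_add[of 0 0] by simp
lemma Der_uminus: "D (- f) = - D f"
proof -
  have "D f + D (-f) = 0" using Der_add[of f "-f"] Der_0 by simp
  then show ?thesis by (metis minus_unique)
qed
lemma Der_diff: "D (f - g) = D f - D g"
  using Der_add[of f "-g"] by (simp add: Der_uminus)
lemma Der_one: "D 1 = 0" using Der_mult[of 1 1] by simp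
lemma Der_lconst0: "D (lconst c) = 0" using Der_lconst[of c 1] by (simp add: Der_one)
lemma Der_sum: "D (\<Sum>x\<in>S. F x) = (\<Sum>x\<in>S. D (F x))"
  by (induction S rule: infinite_finite_induct) (auto simp: Der_0 Der_add)
end

lemma Der_I:
  assumes "\<And>f g. D (f + g) = D f + D g" "\<And>c f. D (lconst c * f) = lconst c * D f"
    "\<And>f g. D (f * g) = f * D g + g * D f"
  shows "D \<in> Der" using assms by (auto simp: Der_def)

lemma H_lvar: "H j (lvar m) = (if j = m then lvar m else 0)"
  by (simp add: lvar_def H_single axis_def)

lemma Dv_lvar: "Dv g (lvar m) = g m * (lvar m :: ('k::comm_ring_1,'n::finite) laurent)"
  by (simp add: Dv_def H_lvar if_distrib cong: if_cong)

lemma Dv_Der: "Dv (g :: 'n \<Rightarrow> ('k::field_char_0,'n::finite) laurent) \<in> Der"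
proof (rule Der_I)
  fix f1 f2 show "Dv g (f1 + f2) = Dv g f1 + Dv g f2"
    by (simp add: Dv_def H_add distrib_left sum.distrib)
next
  fix c f show "Dv g (lconst c * f) = lconst c * Dv g f"
    unfolding Dv_def H_lconst_mult by (simp add: sum_distrib_left mult_ac)
next
  fix f1 f2 show "Dv g (f1 * f2) = f1 * Dv g f2 + f2 * Dv g f1"
    by (simp add: Dv_def H_mult sum_distrib_left distrib_left sum.distrib mult_ac)
qed

lemma single_add_mult: "sgl (a + b) (1::'k::comm_ring_1) = sgl a 1 * sgl b 1"
  by (simp add: mult_single)

lemma vec_decomp: "(b::int^'n::finite) = (\<Sum>j\<in>UNIV. axis j (b $ j))"
  by (simp add: vec_eq_iff sum_component axis_def)

lemma axis_add_int: "axis j (x::int) + axis j y = axis j (x + y)"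
  by (simp add: axis_def vec_eq_iff)

lemma axis_zero_int[simp]: "axis j (0::int) = 0"
  by (simp add: axis_def vec_eq_iff)

lemma Der_uniq:
  fixes D E :: "('k::field_char_0,'n::finite) LL"
  assumes D: "D \<in> Der" and E: "E \<in> Der" and eq: "\<And>m. D (lvar m) = E (lvar m)"
  shows "D = E"
proof -
  have ax: "D (sgl (axis j k) 1) = E (sgl (axis j k) 1)" for j k
  proof (induction k rule: int_induct[where k=0])
    case base
    then show ?case using Der_one[OF D] Der_one[OF E] by simp
  next
    case (step1 i)
    have "sgl (axis j (i+1)) (1::'k) = sgl (axis j i) 1 * lvar j"
      by (simp add: lvar_def mult_single axis_add_int)
    then show ?case using step1 eq by (simp add: Der_mult[OF D] Der_mult[OF E])
  next
    case (step2 i)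
    define u where "u = (sgl (axis j (i - 1)) 1 :: ('k,'n) laurent)"
    have "sgl (axis j i) (1::'k) = u * lvar j"
      by (simp add: u_def lvar_def mult_single axis_add_int)
    then have "u * D (lvar j) + lvar j * D u = u * E (lvar j) + lvar j * E u"
      using step2 by (metis Der_mult[OF D] Der_mult[OF E])
    then have "lvar j * D u = lvar j * E u" using eq by simp
    then have "lvar_inv j * (lvar j * D u) = lvar_inv j * (lvar j * E u)" by simp
    then show ?case unfolding u_def[symmetric] mult.assoc[symmetric]
      by (simp add: mult.commute[of "lvar_inv j"] lvar_inv_mult)
  qed
  have sm: "D (sgl (\<Sum>j\<in>S. axis j (b $ j)) 1) = E (sgl (\<Sum>j\<in>S. axis j (b $ j)) 1)" for S b
  proof (induction S rule: infinite_finite_induct)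
    case (infinite A) then show ?case using Der_one[OF D] Der_one[OF E] by simp
  next
    case empty then show ?case using Der_one[OF D] Der_one[OF E] by simp
  next
    case (insert x F)
    then show ?case by (simp add: single_add_mult Der_mult[OF D] Der_mult[OF E] ax)
  qed
  have mon: "D (sgl b 1) = E (sgl b 1)" for b
    using sm[where S=UNIV and b=b] vec_decomp[of b] by simp
  have "D f = E f" for f
  proof (induction f rule: pm_induct)
    case (single b c)
    have "sgl b c = lconst c * sgl b 1" by (simp add: lconst_mult_single)
    then show ?case by (simp add: Der_lconst[OF D] Der_lconst[OF E] mon)
  next
    case (add f g) then show ?case by (simp add: Der_add[OF D] Der_add[OF E])
  qed
  then show ?thesis by auto
qed

lemma lvar_inv_mult2: "lvar_inv m * (lvar m * x) = (x::('k::comm_ring_1,'n::finite) laurent)"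
proof -
  have "lvar_inv m * lvar m = (1::('k,'n) laurent)" using lvar_inv_mult by (simp add: mult.commute)
  then show ?thesis by (simp add: mult.assoc[symmetric])
qed

lemma Der_repr:
  fixes D :: "('k::field_char_0,'n::finite) LL"
  assumes D: "D \<in> Der"
  shows "D = Dv (\<lambda>m. lvar_inv m * D (lvar m))"
proof (rule Der_uniq[OF D Dv_Der])
  fix m
  have "Dv (\<lambda>m. lvar_inv m * D (lvar m)) (lvar m) = lvar m * (lvar_inv m * D (lvar m))"
    by (simp add: Dv_lvar mult.commute)
  also have "\<dots> = D (lvar m)" by (simp add: mult.assoc[symmetric] lvar_inv_mult)
  finally show "D (lvar m) = Dv (\<lambda>m. lvar_inv m * D (lvar m)) (lvar m)" by simp
qed

lemma Dv_inj:
  assumes "Dv g = (Dv k :: ('k::comm_ring_1,'n::finite) LL)" shows "g = k"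
proof
  fix m
  have "g m * lvar m = k m * lvar m" using assms Dv_lvar by metis
  then have "lvar_inv m * (lvar m * g m) = lvar_inv m * (lvar m * k m)" by (simp add: mult_ac)
  then show "g m = k m" by (simp add: lvar_inv_mult2)
qed

lemma bracket_Der:
  fixes D E :: "('k::field_char_0,'n::finite) LL"
  assumes D: "D \<in> Der" and E: "E \<in> Der"
  shows "lie_bracket D E \<in> Der"
proof (rule Der_I)
  fix f g show "lie_bracket D E (f + g) = lie_bracket D E f + lie_bracket D E g"
    by (simp add: lie_bracket_def Der_add[OF D] Der_add[OF E])
next
  fix c f show "lie_bracket D E (lconst c * f) = lconst c * lie_bracket D E f"
    by (simp add: lie_bracket_def Der_lconst[OF D] Der_lconst[OF E] right_diff_distrib)
next
  fix f g show "lie_bracket D E (f * g) = f * lie_bracket D E g + g * lie_bracket D E f"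
    by (simp add: lie_bracket_def Der_add[OF D] Der_add[OF E] Der_mult[OF D] Der_mult[OF E]
        algebra_simps)
qed

lemma bracket_Dv:
  fixes g k :: "'n::finite \<Rightarrow> ('k::field_char_0,'n) laurent"
  shows "lie_bracket (Dv g) (Dv k) = Dv (\<lambda>m. Dv g (k m) - Dv k (g m))"
proof (rule Der_uniq[OF bracket_Der[OF Dv_Der Dv_Der] Dv_Der])
  fix m
  show "lie_bracket (Dv g) (Dv k) (lvar m) = Dv (\<lambda>m. Dv g (k m) - Dv k (g m)) (lvar m)"
    by (simp add: lie_bracket_def Dv_lvar Der_mult[OF Dv_Der] algebra_simps)
qed

lemma H_Dv: "H i = Dv (\<lambda>j. if j = i then 1 else 0)"
proof (rule ext)
  fix f
  have "(\<Sum>j\<in>UNIV. (if j = i then 1 else 0) * H j f) = (\<Sum>j\<in>UNIV. if j = i then H j f else 0)"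
    by (rule sum.cong) auto
  then show "H i f = Dv (\<lambda>j. if j = i then 1 else 0) f" by (simp add: Dv_def)
qed

lemma Dv_add: "Dv (\<lambda>m. g m + k m) f = Dv g f + Dv k f"
  by (simp add: Dv_def distrib_right sum.distrib)
lemma Dv_lconst: "Dv (\<lambda>m. lconst c * g m) f = lconst c * Dv g f"
  by (simp add: Dv_def sum_distrib_left mult_ac)
lemma Dv_sum: "Dv (\<lambda>m. \<Sum>b\<in>B. F b m) f = (\<Sum>b\<in>B. Dv (F b) f)"
  by (simp add: Dv_def sum_distrib_right) (rule sum.swap)
lemma Dv_zero: "Dv (\<lambda>m. 0) f = 0"
  by (simp add: Dv_def)

definition ip :: "int^'n::finite \<Rightarrow> int^'n \<Rightarrow> int" where
  "ip a b = (\<Sum>i\<in>UNIV. a $ i * b $ i)"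

definition vp :: "('n::finite \<Rightarrow> 'k::comm_ring_1) \<Rightarrow> int^'n \<Rightarrow> 'k" where
  "vp v c = (\<Sum>j\<in>UNIV. v j * of_int (c $ j))"

definition Llt :: "int^'n::finite \<Rightarrow> int \<Rightarrow> ('k::comm_ring_1,'n) laurent \<Rightarrow> bool" where
  "Llt a d f \<longleftrightarrow> (\<forall>b\<in>kys f. ip a b < d)"
definition Lle :: "int^'n::finite \<Rightarrow> int \<Rightarrow> ('k::comm_ring_1,'n) laurent \<Rightarrow> bool" where
  "Lle a d f \<longleftrightarrow> (\<forall>b\<in>kys f. ip a b \<le> d)"

lemma ip_add: "ip a (b + c) = ip a b + ip a c"
  by (simp add: ip_def algebra_simps sum.distrib)
lemma ip_0[simp]: "ip a 0 = 0" by (simp add: ip_def)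
lemma vp_add: "vp v (b + c) = vp v b + vp v c"
  by (simp add: vp_def algebra_simps sum.distrib)

lemma Llt_imp_Lle: "Llt a d f \<Longrightarrow> Lle a d f"
  by (auto simp: Llt_def Lle_def less_imp_le)
lemma Llt_add: "Llt a d f \<Longrightarrow> Llt a d g \<Longrightarrow> Llt a d (f + g)"
  using keys_add[of f g] by (auto simp: Llt_def)
lemma Lle_add: "Lle a d f \<Longrightarrow> Lle a d g \<Longrightarrow> Lle a d (f + g)"
  using keys_add[of f g] by (auto simp: Lle_def)
lemma Llt_uminus: "Llt a d f \<Longrightarrow> Llt a d (- f)"
  by (simp add: Llt_def keys_minus)
lemma Llt_diff: "Llt a d f \<Longrightarrow> Llt a d g \<Longrightarrow> Llt a d (f - g)"
  using Llt_add[of a d f "-g"] Llt_uminus[of a d g] by simp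
lemma Llt_zero: "Llt a d 0" by (simp add: Llt_def)
lemma Llt_sum: "(\<And>x. x \<in> S \<Longrightarrow> Llt a d (F x)) \<Longrightarrow> Llt a d (\<Sum>x\<in>S. F x)"
  by (induction S rule: infinite_finite_induct) (auto simp: Llt_zero Llt_add)
lemma Llt_mono: "Llt a d f \<Longrightarrow> d \<le> d' \<Longrightarrow> Llt a d' f"
  by (auto simp: Llt_def)
lemma Lle_single: "Lle a (ip a c) (sgl c w)" by (simp add: Lle_def)
lemma keys_H: "kys (H j f) \<subseteq> kys f"
  unfolding H_eq by (rule keys_mapp_subset)
lemma Llt_H: "Llt a d f \<Longrightarrow> Llt a d (H j f)"
  using keys_H by (auto simp: Llt_def)
lemma Lle_H: "Lle a d f \<Longrightarrow> Lle a d (H j f)"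
  using keys_H by (auto simp: Lle_def)
lemma Llt_mult1: "Llt a d1 f \<Longrightarrow> Lle a d2 g \<Longrightarrow> Llt a (d1 + d2) (f * g)"
  using keys_mult[of f g] by (fastforce simp: Llt_def Lle_def ip_add)
lemma Llt_mult2: "Lle a d1 f \<Longrightarrow> Llt a d2 g \<Longrightarrow> Llt a (d1 + d2) (f * g)"
  using keys_mult[of f g] by (fastforce simp: Llt_def Lle_def ip_add)
lemma Llt_lookup: "Llt a d f \<Longrightarrow> d \<le> ip a b \<Longrightarrow> lk f b = 0"
  unfolding Llt_def using not_in_keys_iff_lookup_eq_zero by fastforce

lemma top_bracket:
  fixes t g s r :: "'n::finite \<Rightarrow> ('k::field_char_0,'n) laurent"
  assumes t: "\<And>m. t m = sgl a (v m) + s m" and s: "\<And>m. Llt a (ip a a) (s m)"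
    and g: "\<And>m. g m = sgl c (w m) + r m" and r: "\<And>m. Llt a (ip a c) (r m)"
  shows "Llt a (ip a a + ip a c) (Dv t (g m) - Dv g (t m) - sgl (a + c) (vp v c * w m - vp w a * v m))"
proof -
  define R1 where "R1 j = sgl a (v j) * H j (r m) + s j * H j (g m)" for j
  define R2 where "R2 j = sgl c (w j) * H j (s m) + r j * H j (t m)" for j
  have gle: "Lle a (ip a c) (g j)" for j using g r Lle_add Lle_single Llt_imp_Lle by metis
  have tle: "Lle a (ip a a) (t j)" for j using t s Lle_add Lle_single Llt_imp_Lle by metis
  have e1: "t j * H j (g m) = sgl (a + c) (v j * of_int (c $ j) * w m) + R1 j" for j
    unfolding R1_def t g[of m] by (simp add: H_add H_single distrib_left distrib_right mult_single algebra_simps)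
  have e2: "g j * H j (t m) = sgl (a + c) (w j * of_int (a $ j) * v m) + R2 j" for j
    unfolding R2_def g t[of m] by (simp add: H_add H_single distrib_left distrib_right mult_single algebra_simps)
  have l1: "Llt a (ip a a + ip a c) (R1 j)" for j
    unfolding R1_def
    by (rule Llt_add[OF Llt_mult2[OF Lle_single Llt_H[OF r]] Llt_mult1[OF s Lle_H[OF gle]]])
  have l2: "Llt a (ip a a + ip a c) (R2 j)" for j
  proof -
    have "Llt a (ip a c + ip a a) (R2 j)"
      unfolding R2_def by (rule Llt_add[OF Llt_mult2[OF Lle_single Llt_H[OF s]] Llt_mult1[OF r Lle_H[OF tle]]])
    then show ?thesis by (simp add: add.commute)
  qed
  have q1: "(\<Sum>j\<in>UNIV. v j * of_int (c $ j) * w m) = vp v c * w m"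
    by (simp add: vp_def sum_distrib_right)
  have q2: "(\<Sum>j\<in>UNIV. w j * of_int (a $ j) * v m) = vp w a * v m"
    by (simp add: vp_def sum_distrib_right)
  have "Dv t (g m) = sgl (a + c) (vp v c * w m) + (\<Sum>j\<in>UNIV. R1 j)"
    unfolding Dv_def e1 sum.distrib sum_single q1 ..
  moreover have "Dv g (t m) = sgl (a + c) (vp w a * v m) + (\<Sum>j\<in>UNIV. R2 j)"
    unfolding Dv_def e2 sum.distrib sum_single q2 ..
  ultimately have "Dv t (g m) - Dv g (t m) - sgl (a + c) (vp v c * w m - vp w a * v m)
      = (\<Sum>j\<in>UNIV. R1 j) - (\<Sum>j\<in>UNIV. R2 j)"
    by (simp add: single_diff algebra_simps)
  then show ?thesis by (simp add: Llt_diff Llt_sum l1 l2)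
qed

definition ek :: "int^'n::finite \<Rightarrow> int^'n \<Rightarrow> nat \<Rightarrow> int^'n" where
  "ek c a k = c + (\<chi> i. int k * a $ i)"

lemma ek_0[simp]: "ek c a 0 = c" by (simp add: ek_def vec_eq_iff)
lemma ek_Suc: "a + ek c a k = ek c a (Suc k)" by (simp add: ek_def vec_eq_iff algebra_simps)
lemma ip_ek: "ip a (ek c a k) = ip a c + int k * ip a a"
  by (simp add: ek_def ip_add) (simp add: ip_def sum_distrib_left mult_ac)
lemma vp_ek: "vp v (ek c a k) = vp v c + of_nat k * vp v a"
  by (simp add: ek_def vp_add) (simp add: vp_def sum_distrib_left mult_ac)

definition fac :: "('n::finite \<Rightarrow> 'k::comm_ring_1) \<Rightarrow> int^'n \<Rightarrow> int^'n \<Rightarrow> nat \<Rightarrow> 'k" where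
  "fac v a c k = vp v c + (of_nat k - 1) * vp v a"
definition sc :: "('n::finite \<Rightarrow> 'k::comm_ring_1) \<Rightarrow> int^'n \<Rightarrow> int^'n \<Rightarrow> nat \<Rightarrow> 'k" where
  "sc v a c k = (\<Prod>i<k. fac v a c i)"

lemma iter:
  fixes t s :: "'n::finite \<Rightarrow> ('k::field_char_0,'n) laurent"
  assumes t: "\<And>m. t m = sgl a (v m) + s m" and s: "\<And>m. Llt a (ip a a) (s m)"
  shows "\<exists>g. ((lie_bracket (Dv t)) ^^ k) (Dv (\<lambda>m. sgl c (v m))) = Dv g \<and>
     (\<forall>m. Llt a (ip a c + int k * ip a a) (g m - sgl (ek c a k) (sc v a c k * v m)))"
proof (induction k)
  case 0
  show ?case by (rule exI[of _ "\<lambda>m. sgl c (v m)"]) (simp add: sc_def Llt_zero)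
next
  case (Suc k)
  then obtain g where g: "((lie_bracket (Dv t)) ^^ k) (Dv (\<lambda>m. sgl c (v m))) = Dv g"
    and gl: "\<And>m. Llt a (ip a c + int k * ip a a) (g m - sgl (ek c a k) (sc v a c k * v m))" by blast
  define w where "w m = sc v a c k * v m" for m
  define r where "r m = g m - sgl (ek c a k) (w m)" for m
  have gr: "g m = sgl (ek c a k) (w m) + r m" for m by (simp add: r_def)
  have rl: "Llt a (ip a (ek c a k)) (r m)" for m using gl[of m] by (simp add: r_def w_def ip_ek)
  have tb: "Llt a (ip a a + ip a (ek c a k)) (Dv t (g m) - Dv g (t m) -
      sgl (a + ek c a k) (vp v (ek c a k) * w m - vp w a * v m))" for m
    by (rule top_bracket[OF t s gr rl])
  have vw: "vp w a = sc v a c k * vp v a" by (simp add: w_def vp_def sum_distrib_left mult_ac)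
  have co: "vp v (ek c a k) * w m - vp w a * v m = sc v a c (Suc k) * v m" for m
    by (simp add: vw w_def vp_ek sc_def fac_def algebra_simps)
  have "((lie_bracket (Dv t)) ^^ Suc k) (Dv (\<lambda>m. sgl c (v m))) = Dv (\<lambda>m. Dv t (g m) - Dv g (t m))"
    by (simp add: g bracket_Dv)
  moreover have "Llt a (ip a c + int (Suc k) * ip a a)
      (Dv t (g m) - Dv g (t m) - sgl (ek c a (Suc k)) (sc v a c (Suc k) * v m))" for m
  proof -
    have "ip a a + ip a (ek c a k) = ip a c + int (Suc k) * ip a a" by (simp add: ip_ek algebra_simps)
    then show ?thesis using tb[of m] unfolding co ek_Suc by simp
  qed
  ultimately show ?case by blast
qed

lemma notop:
  fixes t s :: "'n::finite \<Rightarrow> ('k::field_char_0,'n) laurent" and p :: "'k poly"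
  assumes t: "\<And>m. t m = sgl a (v m) + s m" and s: "\<And>m. Llt a (ip a a) (s m)"
    and M: "ip a a > 0" and v0: "v m0 \<noteq> 0" and fac: "\<And>k. fac v a c k \<noteq> 0"
    and p: "lead_coeff p = 1"
    and z: "\<And>f. (\<Sum>k\<le>degree p. lconst (coeff p k) *
               ((lie_bracket (Dv t)) ^^ k) (Dv (\<lambda>m. sgl c (v m))) f) = 0"
  shows False
proof -
  have "\<forall>k. \<exists>g. ((lie_bracket (Dv t)) ^^ k) (Dv (\<lambda>m. sgl c (v m))) = Dv g \<and>
     (\<forall>m. Llt a (ip a c + int k * ip a a) (g m - sgl (ek c a k) (sc v a c k * v m)))"
    using iter[where t=t and s=s and a=a and v=v, OF t s] by blast
  then obtain G where G: "\<And>k. ((lie_bracket (Dv t)) ^^ k) (Dv (\<lambda>m. sgl c (v m))) = Dv (G k)"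
    and Gl: "\<And>k m. Llt a (ip a c + int k * ip a a) (G k m - sgl (ek c a k) (sc v a c k * v m))"
    by metis
  define n where "n = degree p"
  define Gs where "Gs m = (\<Sum>k\<le>n. lconst (coeff p k) * G k m)" for m
  have "Dv Gs f = Dv (\<lambda>m. 0) f" for f
  proof -
    have "Dv Gs f = (\<Sum>k\<le>n. Dv (\<lambda>m. lconst (coeff p k) * G k m) f)"
      unfolding Gs_def by (rule Dv_sum)
    also have "\<dots> = (\<Sum>k\<le>n. lconst (coeff p k) * Dv (G k) f)"
      by (simp add: Dv_lconst)
    also have "\<dots> = 0" using z[of f] by (simp add: G n_def)
    finally show ?thesis by (simp add: Dv_zero)
  qed
  then have "Gs = (\<lambda>m. 0)" using Dv_inj by blast
  then have L0: "lk (Gs m0) (ek c a n) = 0" by simp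
  have lkG: "lk (G k m0) (ek c a n) = (if k = n then sc v a c n * v m0 else 0)" if "k \<le> n" for k
  proof -
    have ipn: "ip a (ek c a n) = ip a c + int n * ip a a" by (rule ip_ek)
    have le: "ip a c + int k * ip a a \<le> ip a (ek c a n)"
      using that M by (simp add: ipn mult_right_mono)
    have r0: "lk (G k m0 - sgl (ek c a k) (sc v a c k * v m0)) (ek c a n) = 0"
      by (rule Llt_lookup[OF Gl le])
    show ?thesis
    proof (cases "k = n")
      case True then show ?thesis using r0 by (simp add: lookup_minus)
    next
      case False
      then have "k < n" using that by simp
      then have "ip a (ek c a k) \<noteq> ip a (ek c a n)" using M by (simp add: ip_ek)
      then have "ek c a k \<noteq> ek c a n" by metis
      then show ?thesis using r0 False by (simp add: lookup_minus lookup_single when_def)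
    qed
  qed
  have "lk (Gs m0) (ek c a n) = (\<Sum>k\<le>n. coeff p k * lk (G k m0) (ek c a n))"
    by (simp add: Gs_def lookup_sum lk_lconst_mult)
  also have "\<dots> = (\<Sum>k\<le>n. if k = n then coeff p k * (sc v a c n * v m0) else 0)"
    by (rule sum.cong) (auto simp: lkG)
  also have "\<dots> = sc v a c n * v m0" using p by (simp add: n_def)
  finally have "lk (Gs m0) (ek c a n) = sc v a c n * v m0" .
  moreover have "sc v a c n \<noteq> 0" using fac by (simp add: sc_def)
  ultimately show False using v0 L0 by simp
qed

lemma eig_poly:
  fixes T :: "('k::field_char_0,'n::finite) LL"
  assumes T: "T \<in> Der" and B: "finite B" and Y: "\<And>b. b \<in> B \<Longrightarrow> Y b \<in> Der"
    and ev: "\<And>b. b \<in> B \<Longrightarrow> lie_bracket T (Y b) = (\<lambda>f. lconst (\<mu> b) * Y b f)"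
  defines "p \<equiv> (\<Prod>b\<in>B. [:- \<mu> b, 1:])"
  shows "lead_coeff p = 1"
    and "(\<Sum>k\<le>degree p. lconst (coeff p k) * ((lie_bracket T) ^^ k) (\<lambda>f. \<Sum>b\<in>B. Y b f) f) = 0"
proof -
  show "lead_coeff p = 1" by (simp add: p_def lead_coeff_prod)
  have pw: "((lie_bracket T) ^^ k) (\<lambda>f. \<Sum>b\<in>B. Y b f) = (\<lambda>f. \<Sum>b\<in>B. lconst (\<mu> b ^ k) * Y b f)" for k
  proof (induction k)
    case 0 then show ?case by simp
  next
    case (Suc k)
    show ?case
    proof (rule ext)
      fix f
      have "((lie_bracket T) ^^ Suc k) (\<lambda>f. \<Sum>b\<in>B. Y b f) f
          = T (\<Sum>b\<in>B. lconst (\<mu> b ^ k) * Y b f) - (\<Sum>b\<in>B. lconst (\<mu> b ^ k) * Y b (T f))"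
        by (simp only: funpow.simps comp_apply Suc.IH) (simp add: lie_bracket_def)
      also have "\<dots> = (\<Sum>b\<in>B. lconst (\<mu> b ^ k) * lie_bracket T (Y b) f)"
        by (simp add: Der_sum[OF T] Der_lconst[OF T] lie_bracket_def sum_subtractf right_diff_distrib)
      also have "\<dots> = (\<Sum>b\<in>B. lconst (\<mu> b ^ Suc k) * Y b f)"
        by (rule sum.cong) (simp_all add: ev lconst_mult mult_ac)
      finally show "((lie_bracket T) ^^ Suc k) (\<lambda>f. \<Sum>b\<in>B. Y b f) f = (\<Sum>b\<in>B. lconst (\<mu> b ^ Suc k) * Y b f)" .
    qed
  qed
  have pz: "poly p (\<mu> b) = 0" if "b \<in> B" for b
    unfolding p_def poly_prod using that B by (auto intro!: prod_zero)
  have "(\<Sum>k\<le>degree p. lconst (coeff p k) * ((lie_bracket T) ^^ k) (\<lambda>f. \<Sum>b\<in>B. Y b f) f)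
      = (\<Sum>k\<le>degree p. \<Sum>b\<in>B. lconst (coeff p k * \<mu> b ^ k) * Y b f)"
    by (simp add: pw sum_distrib_left lconst_mult mult_ac)
  also have "\<dots> = (\<Sum>b\<in>B. \<Sum>k\<le>degree p. lconst (coeff p k * \<mu> b ^ k) * Y b f)"
    by (rule sum.swap)
  also have "\<dots> = (\<Sum>b\<in>B. lconst (poly p (\<mu> b)) * Y b f)"
    by (simp add: poly_altdef lconst_sum sum_distrib_right)
  also have "\<dots> = 0" using pz by simp
  finally show "(\<Sum>k\<le>degree p. lconst (coeff p k) * ((lie_bracket T) ^^ k) (\<lambda>f. \<Sum>b\<in>B. Y b f) f) = 0" .
qed

lemma Der_fadd:
  fixes D E :: "('k::field_char_0,'n::finite) LL"
  assumes "D \<in> Der" "E \<in> Der" shows "(\<lambda>f. D f + E f) \<in> Der"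
proof -
  obtain g where g: "D = Dv g" using Der_repr[OF assms(1)] by blast
  obtain k where k: "E = Dv k" using Der_repr[OF assms(2)] by blast
  have "(\<lambda>f. D f + E f) = Dv (\<lambda>m. g m + k m)" by (rule ext) (simp add: g k Dv_add)
  then show ?thesis by (simp add: Dv_Der)
qed

lemma Der_fscal:
  fixes D :: "('k::field_char_0,'n::finite) LL"
  assumes "D \<in> Der" shows "(\<lambda>f. lconst c * D f) \<in> Der"
proof -
  obtain g where g: "D = Dv g" using Der_repr[OF assms(1)] by blast
  have "(\<lambda>f. lconst c * D f) = Dv (\<lambda>m. lconst c * g m)" by (rule ext) (simp add: g Dv_lconst)
  then show ?thesis by (simp add: Dv_Der)
qed

lemma Der_fzero: "(\<lambda>f. 0) \<in> (Der :: ('k::field_char_0,'n::finite) LL set)"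
proof -
  have "(\<lambda>f. 0) = (Dv (\<lambda>m. 0) :: ('k,'n) LL)" by (rule ext) (simp add: Dv_zero)
  then show ?thesis by (simp add: Dv_Der)
qed

lemma Der_fsum:
  fixes Y :: "'b \<Rightarrow> ('k::field_char_0,'n::finite) LL"
  assumes "\<And>b. b \<in> B \<Longrightarrow> Y b \<in> Der" shows "(\<lambda>f. \<Sum>b\<in>B. Y b f) \<in> Der"
  using assms
proof (induction B rule: infinite_finite_induct)
  case (infinite A) then show ?case using Der_fzero by simp
next
  case empty then show ?case using Der_fzero by simp
next
  case (insert x F) then show ?case by (simp add: Der_fadd)
qed

lemma H_Der: "H i \<in> (Der :: ('k::field_char_0,'n::finite) LL set)"
  by (simp add: H_Dv Dv_Der)

context
  fixes \<sigma> :: "('k::field_char_0,'n::finite) LL \<Rightarrow> ('k,'n) LL"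
  assumes la: "lie_aut \<sigma>"
begin

lemma sig_Der: "D \<in> Der \<Longrightarrow> \<sigma> D \<in> Der"
  using la by (auto simp: lie_aut_def bij_betw_def)
lemma sig_inj: "D \<in> Der \<Longrightarrow> E \<in> Der \<Longrightarrow> \<sigma> D = \<sigma> E \<Longrightarrow> D = E"
  using la by (auto simp: lie_aut_def bij_betw_def inj_on_def)
lemma sig_surj: "E \<in> Der \<Longrightarrow> \<exists>D\<in>Der. \<sigma> D = E"
proof -
  assume E: "E \<in> Der"
  have "\<sigma> ` Der = Der" using la by (simp add: lie_aut_def bij_betw_def)
  then have "E \<in> \<sigma> ` Der" using E by simp
  then show ?thesis by blast
qed
lemma sig_add: "D \<in> Der \<Longrightarrow> E \<in> Der \<Longrightarrow> \<sigma> (\<lambda>f. D f + E f) = (\<lambda>f. \<sigma> D f + \<sigma> E f)"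
  using la by (auto simp: lie_aut_def)
lemma sig_scal: "D \<in> Der \<Longrightarrow> \<sigma> (\<lambda>f. lconst c * D f) = (\<lambda>f. lconst c * \<sigma> D f)"
  using la by (auto simp: lie_aut_def)
lemma sig_br: "D \<in> Der \<Longrightarrow> E \<in> Der \<Longrightarrow> \<sigma> (lie_bracket D E) = lie_bracket (\<sigma> D) (\<sigma> E)"
  using la by (auto simp: lie_aut_def)
lemma sig_zero: "\<sigma> (\<lambda>f. 0) = (\<lambda>f. 0)"
proof -
  have "\<sigma> (\<lambda>f. 0 + 0) = (\<lambda>f. \<sigma> (\<lambda>f. 0) f + \<sigma> (\<lambda>f. 0) f)"
    by (rule sig_add[OF Der_fzero Der_fzero])
  then have "\<And>f. \<sigma> (\<lambda>f. 0) f = \<sigma> (\<lambda>f. 0) f + \<sigma> (\<lambda>f. 0) f" by (simp add: fun_eq_iff)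
  then show ?thesis by (auto simp: fun_eq_iff)
qed
lemma sig_sum: assumes "finite B" "\<And>b. b \<in> B \<Longrightarrow> Y b \<in> Der"
  shows "\<sigma> (\<lambda>f. \<Sum>b\<in>B. Y b f) = (\<lambda>f. \<Sum>b\<in>B. \<sigma> (Y b) f)"
  using assms
proof (induction B rule: finite_induct)
  case empty then show ?case using sig_zero by simp
next
  case (insert x F)
  then have "\<sigma> (\<lambda>f. Y x f + (\<Sum>b\<in>F. Y b f)) = (\<lambda>f. \<sigma> (Y x) f + \<sigma> (\<lambda>f. \<Sum>b\<in>F. Y b f) f)"
    by (intro sig_add Der_fsum) auto
  then show ?case using insert by simp
qed

end

lemma H_one: "H j 1 = (0::('k::comm_ring_1,'n::finite) laurent)"
  using H_single[of j 0 "1::'k"] by simp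
lemma H_zero: "H j 0 = (0::('k::comm_ring_1,'n::finite) laurent)"
  using H_single[of j 0 "0::'k"] by simp
lemma Dv_1: "Dv g 1 = 0" by (simp add: Dv_def H_one)
lemma Dv_0': "Dv g 0 = 0" by (simp add: Dv_def H_zero)

lemma br_H_gen:
  "lie_bracket (H i) (Dv x) = Dv (\<lambda>m. H i (x m :: ('k::field_char_0,'n::finite) laurent))"
proof -
  have "lie_bracket (H i) (Dv x) = Dv (\<lambda>m. Dv (\<lambda>j. if j = i then 1 else 0) (x m) - Dv x (if m = i then 1 else 0))"
    unfolding H_Dv by (rule bracket_Dv)
  also have "\<dots> = Dv (\<lambda>m. H i (x m))"
    by (simp add: H_Dv[symmetric] Dv_1 Dv_0' if_distrib cong: if_cong)
  finally show ?thesis .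
qed

lemma Dv_scal: "(\<lambda>f. lconst c * Dv x f) = Dv (\<lambda>m. lconst c * x m)"
  by (rule ext) (simp add: Dv_lconst)

lemma br_H_single:
  "lie_bracket (H i) (Dv (\<lambda>m. sgl b (x m))) =
     (\<lambda>f. lconst (of_int (b $ i)) * Dv (\<lambda>m. sgl b (x m)) f :: ('k::field_char_0,'n::finite) laurent)"
  unfolding br_H_gen Dv_scal by (simp add: H_single lconst_mult_single)

lemma br_const:
  "lie_bracket (Dv (\<lambda>j. lconst (\<kappa> j))) (Dv y) =
     Dv (\<lambda>m. Dv (\<lambda>j. lconst (\<kappa> j)) (y m :: ('k::field_char_0,'n::finite) laurent))"
  unfolding bracket_Dv by (simp add: Der_lconst0[OF Dv_Der])

lemma lk_Dv_const: "lk (Dv (\<lambda>j. lconst (\<kappa> j)) f) c = vp \<kappa> c * lk f c"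
  unfolding Dv_def lookup_sum lk_lconst_mult lk_H vp_def sum_distrib_right by (simp add: mult_ac)

lemma ip_comm: "ip a b = ip b a" by (simp add: ip_def mult.commute)

lemma ip_pos: assumes "a \<noteq> 0" shows "ip a a > 0"
proof -
  obtain j where j: "a $ j \<noteq> 0" using assms by (auto simp: vec_eq_iff)
  have "a $ j * a $ j \<le> ip a a"
    unfolding ip_def by (rule member_le_sum) auto
  moreover have "a $ j * a $ j > 0" using j by (metis zero_less_mult_iff linorder_neq_iff mult_neg_neg)
  ultimately show ?thesis by simp
qed

lemma ip_sq: "ip (a - b) (a - b) = ip a a - 2 * ip a b + ip b b"
proof -
  have "ip (a - b) (a - b) = (\<Sum>i\<in>UNIV. a $ i * a $ i - 2 * (a $ i * b $ i) + b $ i * b $ i)"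
    unfolding ip_def by (rule sum.cong) (simp_all add: algebra_simps)
  also have "\<dots> = ip a a - 2 * ip a b + ip b b"
    by (simp add: ip_def sum.distrib sum_subtractf sum_distrib_left)
  finally show ?thesis .
qed

lemma ip_lt: assumes "b \<noteq> a" "ip b b \<le> ip a a" shows "ip a b < ip a a"
proof -
  have "a - b \<noteq> 0" using assms by simp
  then have "ip (a - b) (a - b) > 0" by (rule ip_pos)
  then show ?thesis using assms(2) by (simp add: ip_sq)
qed

lemma vp_axis: "vp v (axis m0 1) = v m0"
proof -
  have "vp v (axis m0 1) = (\<Sum>j\<in>UNIV. if j = m0 then v j else 0)"
    unfolding vp_def by (rule sum.cong) (simp_all add: axis_def)
  then show ?thesis by simp
qed

lemma cart:
  fixes \<sigma> :: "('k::field_char_0,'n::finite) LL \<Rightarrow> ('k,'n) LL"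
  assumes la: "lie_aut \<sigma>"
  shows "\<exists>\<kappa>. \<sigma> (H i) = Dv (\<lambda>j. lconst (\<kappa> j))"
proof -
  define T where "T = \<sigma> (H i)"
  have TD: "T \<in> Der" unfolding T_def by (rule sig_Der[OF la H_Der])
  define t where "t m = lvar_inv m * T (lvar m)" for m
  have Tt: "T = Dv t" unfolding t_def by (rule Der_repr[OF TD])
  have keys0: "kys (t m) \<subseteq> {0}" for m
  proof (rule ccontr)
    assume "\<not> kys (t m) \<subseteq> {0}"
    then obtain b1 where b1: "b1 \<in> kys (t m)" "b1 \<noteq> 0" by blast
    define K where "K = (\<Union>m. kys (t m)) - {0}"
    have fK: "finite K" by (simp add: K_def)
    have b1K: "b1 \<in> K" using b1 by (auto simp: K_def)
    define mx where "mx = Max ((\<lambda>b. ip b b) ` K)"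
    have "mx \<in> (\<lambda>b. ip b b) ` K" unfolding mx_def using fK b1K by (intro Max_in) auto
    then obtain a where aK: "a \<in> K" and amx: "ip a a = mx" by auto
    have amax: "ip b b \<le> ip a a" if "b \<in> K" for b
      unfolding amx mx_def using fK that by (intro Max_ge) auto
    have a0: "a \<noteq> 0" using aK by (simp add: K_def)
    have M: "ip a a > 0" by (rule ip_pos[OF a0])
    define v where "v m = lk (t m) a" for m
    define s where "s m = t m - sgl a (v m)" for m
    have tdec: "t m = sgl a (v m) + s m" for m by (simp add: s_def)
    have slt: "Llt a (ip a a) (s m)" for m
      unfolding Llt_def
    proof
      fix b assume b: "b \<in> kys (s m)"
      then have "lk (s m) b \<noteq> 0" by (simp add: in_keys_iff)
      then have ba: "b \<noteq> a" and bt: "lk (t m) b \<noteq> 0"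
        by (auto simp: s_def v_def lookup_minus lookup_single when_def split: if_splits)
      show "ip a b < ip a a"
      proof (cases "b = 0")
        case True then show ?thesis using M by simp
      next
        case False
        then have "b \<in> K" using bt by (auto simp: K_def in_keys_iff)
        then show ?thesis by (intro ip_lt ba amax)
      qed
    qed
    obtain m0 where "a \<in> kys (t m0)" using aK by (auto simp: K_def)
    then have v0: "v m0 \<noteq> 0" by (simp add: v_def in_keys_iff)
    obtain c where fac: "\<And>k. fac v a c k \<noteq> 0"
    proof (cases "vp v a = 0")
      case True
      show ?thesis by (rule that[of "axis m0 1"]) (simp add: fac_def vp_axis True v0)
    next
      case False
      have "fac v a (a + a) k = of_nat (Suc k) * vp v a" for k
        unfolding fac_def vp_add by (simp add: algebra_simps)
      then show ?thesis using False by (intro that[of "a + a"]) (simp del: of_nat_Suc)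
    qed
    define E where "E = Dv (\<lambda>m. sgl c (v m))"
    have ED: "E \<in> Der" by (simp add: E_def Dv_Der)
    obtain Z where ZD: "Z \<in> Der" and ZE: "\<sigma> Z = E" using sig_surj[OF la ED] by blast
    define z where "z m = lvar_inv m * Z (lvar m)" for m
    have Zz: "Z = Dv z" unfolding z_def by (rule Der_repr[OF ZD])
    define B where "B = (\<Union>m. kys (z m))"
    have fB: "finite B" by (simp add: B_def)
    define Zb where "Zb b = Dv (\<lambda>m. sgl b (lk (z m) b))" for b
    have ZbD: "Zb b \<in> Der" for b by (simp add: Zb_def Dv_Der)
    have ZB: "Z = (\<lambda>f. \<Sum>b\<in>B. Zb b f)"
    proof (rule ext)
      fix f
      have "z = (\<lambda>m. \<Sum>b\<in>B. sgl b (lk (z m) b))"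
        by (rule ext, rule pm_expand_sup) (auto simp: fB B_def)
      then have "Dv z f = Dv (\<lambda>m. \<Sum>b\<in>B. sgl b (lk (z m) b)) f" by simp
      also have "\<dots> = (\<Sum>b\<in>B. Zb b f)" unfolding Zb_def by (rule Dv_sum)
      finally show "Z f = (\<Sum>b\<in>B. Zb b f)" by (simp add: Zz)
    qed
    define Y where "Y b = \<sigma> (Zb b)" for b
    have YD: "Y b \<in> Der" for b unfolding Y_def by (rule sig_Der[OF la ZbD])
    have EY: "E = (\<lambda>f. \<Sum>b\<in>B. Y b f)"
      using ZE unfolding ZB Y_def using sig_sum[OF la fB ZbD] by simp
    have ev: "lie_bracket T (Y b) = (\<lambda>f. lconst (of_int (b $ i)) * Y b f)" for b
    proof -
      have "lie_bracket T (Y b) = \<sigma> (lie_bracket (H i) (Zb b))"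
        unfolding T_def Y_def by (rule sig_br[OF la H_Der ZbD, symmetric])
      also have "\<dots> = \<sigma> (\<lambda>f. lconst (of_int (b $ i)) * Zb b f)"
        unfolding Zb_def br_H_single ..
      also have "\<dots> = (\<lambda>f. lconst (of_int (b $ i)) * Y b f)"
        unfolding Y_def by (rule sig_scal[OF la ZbD])
      finally show ?thesis .
    qed
    define p where "p = (\<Prod>b\<in>B. [:- (of_int (b $ i) :: 'k), 1:])"
    have p1: "lead_coeff p = 1"
      unfolding p_def by (rule eig_poly(1)[OF TD fB YD ev])
    have pz: "(\<Sum>k\<le>degree p. lconst (coeff p k) * ((lie_bracket T) ^^ k) (\<lambda>f. \<Sum>b\<in>B. Y b f) f) = 0" for f
      unfolding p_def by (rule eig_poly(2)[OF TD fB YD ev])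
    have pz': "(\<Sum>k\<le>degree p. lconst (coeff p k) * ((lie_bracket (Dv t)) ^^ k) (Dv (\<lambda>m. sgl c (v m))) f) = 0" for f
      using pz[of f] unfolding EY[symmetric] E_def Tt .
    show False
      by (rule notop[where t=t and s=s and a=a and v=v, OF tdec slt M v0 fac p1 pz'])
  qed
  have "t j = lconst (lk (t j) 0)" for j
  proof -
    have "t j = (\<Sum>b\<in>{0}. sgl b (lk (t j) b))" by (rule pm_expand_sup) (auto simp: keys0)
    then show ?thesis by (simp add: lconst_def)
  qed
  then have "t = (\<lambda>j. lconst (lk (t j) 0))" by auto
  then show ?thesis using Tt T_def by metis
qed

lemma prod_single: "(\<Prod>x\<in>S. sgl (f x) (1::'k::comm_ring_1)) = sgl (\<Sum>x\<in>S. f x) 1"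
  by (induction S rule: infinite_finite_induct) (auto simp: mult_single)

lemma single_axis_pow: "(sgl (axis j x) (1::'k::comm_ring_1)) ^ n = sgl (axis j (int n * x)) 1"
  by (induction n) (simp_all add: mult_single axis_add_int algebra_simps)

lemma lvar_pow_single: "lvar_pow j k = (sgl (axis j k) 1 :: ('k::comm_ring_1,'n::finite) laurent)"
  by (simp add: lvar_pow_def lvar_def lvar_inv_def single_axis_pow)

lemma prod_lvar_pow: "(\<Prod>j\<in>UNIV. lvar_pow j (A $ j $ i)) =
   (sgl (A *v axis i 1) 1 :: ('k::comm_ring_1,'n::finite) laurent)"
proof -
  have "(\<Sum>j\<in>UNIV. axis j (A $ j $ i)) = A *v axis i 1"
    by (simp add: vec_eq_iff sum_component matrix_vector_mult_def axis_def if_distrib cong: if_cong)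
  then show ?thesis by (simp add: lvar_pow_single prod_single)
qed

context
  fixes A C :: "int^'n::finite^'n"
  assumes AC: "A ** C = mat 1" and CA: "C ** A = mat 1"
begin

lemma injC: "inj (\<lambda>k. C *v k)"
  by (rule injI) (metis matrix_vector_mul_assoc AC matrix_vector_mul_lid)
lemma injA: "inj (\<lambda>k. A *v k)"
  by (rule injI) (metis matrix_vector_mul_assoc CA matrix_vector_mul_lid)

definition phiA :: "('k::field_char_0,'n) laurent \<Rightarrow> ('k,'n) laurent" where
  "phiA f = Poly_Mapping.map_key (\<lambda>k. C *v k) f"
definition psiA :: "('k::field_char_0,'n) laurent \<Rightarrow> ('k,'n) laurent" where
  "psiA f = Poly_Mapping.map_key (\<lambda>k. A *v k) f"

lemma phiA_single: "phiA (sgl b c) = sgl (A *v b) c"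
proof -
  have "sgl b c = sgl (C *v (A *v b)) c" by (simp add: matrix_vector_mul_assoc CA)
  then show ?thesis unfolding phiA_def using map_key_single[OF injC] by metis
qed
lemma psiA_single: "psiA (sgl b c) = sgl (C *v b) c"
proof -
  have "sgl b c = sgl (A *v (C *v b)) c" by (simp add: matrix_vector_mul_assoc AC)
  then show ?thesis unfolding psiA_def using map_key_single[OF injA] by metis
qed
lemma phiA_add: "phiA (f + g) = phiA f + phiA g"
  unfolding phiA_def by (rule map_key_plus[OF injC])
lemma psiA_add: "psiA (f + g) = psiA f + psiA g"
  unfolding psiA_def by (rule map_key_plus[OF injA])

lemma phiA_mult: "phiA (f * g) = phiA f * phiA g"
proof (induction f rule: pm_induct)
  case (single b c)
  show ?case
  proof (induction g rule: pm_induct)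
    case (single b' c') then show ?case
      by (simp add: mult_single phiA_single matrix_vector_right_distrib)
  next
    case (add g1 g2) then show ?case by (simp add: distrib_left phiA_add)
  qed
next
  case (add f1 f2) then show ?case by (simp add: distrib_right phiA_add)
qed

lemma phi_psi: "phiA (psiA f) = f"
  by (induction f rule: pm_induct)
     (simp_all add: psiA_single phiA_single psiA_add phiA_add matrix_vector_mul_assoc AC)
lemma psi_phi: "psiA (phiA f) = f"
  by (induction f rule: pm_induct)
     (simp_all add: psiA_single phiA_single psiA_add phiA_add matrix_vector_mul_assoc CA)

lemma sigA_exists: "is_sigmaA A (phiA :: ('k::field_char_0,'n) laurent \<Rightarrow> _)"
  unfolding is_sigmaA_def kalg_aut_def
proof (intro conjI allI)
  show "bij (phiA :: ('k,'n) laurent \<Rightarrow> _)"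
    by (rule o_bij[of psiA]) (simp_all add: fun_eq_iff phi_psi psi_phi)
  show "phiA (f + g) = phiA f + phiA g" for f g :: "('k,'n) laurent" by (rule phiA_add)
  show "phiA (f * g) = phiA f * phiA g" for f g :: "('k,'n) laurent" by (rule phiA_mult)
  show "phiA 1 = (1::('k,'n) laurent)"
    using phiA_single[of 0 "1::'k"] by simp
  show "phiA (lconst c * f) = lconst c * phiA f" for c and f :: "('k,'n) laurent"
    by (simp add: phiA_mult lconst_def phiA_single)
  show "phiA (lvar i) = (\<Prod>j\<in>UNIV. lvar_pow j (A $ j $ i) :: ('k,'n) laurent)" for i
    by (simp add: prod_lvar_pow lvar_def phiA_single)
qed

end

lemma mv_sum: "(A::int^'n::finite^'m::finite) *v (\<Sum>x\<in>S. f x) = (\<Sum>x\<in>S. A *v f x)"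
  by (induction S rule: infinite_finite_induct) (simp_all add: matrix_vector_right_distrib)

lemma sigA_single:
  fixes \<phi> :: "('k::field_char_0,'n::finite) LL"
  assumes "is_sigmaA A \<phi>"
  shows "\<phi> (sgl b c) = sgl (A *v b) c"
proof -
  have add: "\<phi> (f + g) = \<phi> f + \<phi> g" and mul: "\<phi> (f * g) = \<phi> f * \<phi> g" and one: "\<phi> 1 = 1"
    and lc: "\<phi> (lconst c * f) = lconst c * \<phi> f" and lv: "\<phi> (lvar j) = sgl (A *v axis j 1) 1"
    for f g c j using assms by (auto simp: is_sigmaA_def kalg_aut_def prod_lvar_pow)
  have ax: "\<phi> (sgl (axis j k) 1) = sgl (A *v axis j k) 1" for j k
  proof (induction k rule: int_induct[where k=0])
    case base then show ?case using one by simp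
  next
    case (step1 i)
    have "sgl (axis j (i+1)) (1::'k) = sgl (axis j i) 1 * lvar j"
      by (simp add: lvar_def mult_single axis_add_int)
    then show ?case using step1 by (simp add: mul lv mult_single matrix_vector_right_distrib[symmetric] axis_add_int)
  next
    case (step2 i)
    define u where "u = (sgl (axis j (i - 1)) 1 :: ('k,'n) laurent)"
    have "sgl (axis j i) (1::'k) = u * lvar j"
      by (simp add: u_def lvar_def mult_single axis_add_int)
    then have "\<phi> u * sgl (A *v axis j 1) 1 = sgl (A *v axis j i) 1" using step2 by (simp add: mul lv)
    then have "\<phi> u * sgl (A *v axis j 1) 1 * sgl (- (A *v axis j 1)) 1 =
        sgl (A *v axis j i) 1 * sgl (- (A *v axis j 1)) 1" by simp
    moreover have "axis j i - axis j 1 = axis j (i - 1)" by (simp add: axis_def vec_eq_iff)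
    ultimately show ?case
      by (simp add: u_def mult.assoc mult_single matrix_vector_mult_diff_distrib[symmetric])
  qed
  have pr: "\<phi> (\<Prod>x\<in>S. F x) = (\<Prod>x\<in>S. \<phi> (F x))" for S and F :: "'n \<Rightarrow> ('k,'n) laurent"
    by (induction S rule: infinite_finite_induct) (simp_all add: one mul)
  have m1: "\<phi> (sgl b 1) = sgl (A *v b) 1"
  proof -
    have "sgl b (1::'k) = (\<Prod>j\<in>UNIV. sgl (axis j (b $ j)) 1)"
      using vec_decomp[of b] by (simp add: prod_single)
    then have "\<phi> (sgl b 1) = (\<Prod>j\<in>UNIV. sgl (A *v axis j (b $ j)) 1)" by (simp add: pr ax)
    also have "\<dots> = sgl (A *v (\<Sum>j\<in>UNIV. axis j (b $ j))) 1"
      by (simp add: prod_single mv_sum)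
    finally show ?thesis using vec_decomp[of b] by simp
  qed
  have "\<phi> (sgl b c) = \<phi> (lconst c * sgl b 1)" by (simp add: lconst_mult_single)
  also have "\<dots> = lconst c * \<phi> (sgl b 1)" by (rule lc)
  also have "\<dots> = sgl (A *v b) c" by (simp add: m1 lconst_mult_single)
  finally show ?thesis .
qed

lemma sigA_conj:
  fixes \<phi> :: "('k::field_char_0,'n::finite) LL"
  assumes sA: "is_sigmaA A \<phi>"
  shows "conj_act \<phi> (\<lambda>f. \<Sum>j\<in>UNIV. of_int (A $ i $ j) * H j f) = H i"
proof -
  define T where "T = (\<lambda>f::('k,'n) laurent. \<Sum>j\<in>UNIV. of_int (A $ i $ j) * H j f)"
  have phadd: "\<phi> (f + g) = \<phi> f + \<phi> g" and bj: "bij \<phi>" for f g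
    using sA by (auto simp: is_sigmaA_def kalg_aut_def)
  have comm: "\<phi> (T f) = H i (\<phi> f)" for f
  proof (induction f rule: pm_induct)
    case (single b c)
    have "T (sgl b c) = sgl b ((\<Sum>j\<in>UNIV. of_int (A $ i $ j) * of_int (b $ j)) * c)"
      by (simp add: T_def H_single of_int_lconst lconst_mult_single sum_single sum_distrib_right mult.assoc)
    also have "\<dots> = sgl b (of_int ((A *v b) $ i) * c)"
      by (simp add: matrix_vector_mult_def)
    finally show ?case by (simp add: sigA_single[OF sA] H_single)
  next
    case (add f g)
    have "T (f + g) = T f + T g" by (simp add: T_def H_add distrib_left sum.distrib)
    then show ?case using add.IH by (simp add: phadd H_add)
  qed
  show ?thesis
  proof (rule ext)
    fix y
    have "conj_act \<phi> T y = \<phi> (T (inv \<phi> y))" by (simp add: conj_act_def)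
    also have "\<dots> = H i (\<phi> (inv \<phi> y))" by (rule comm)
    also have "\<dots> = H i y" using bj by (simp add: bij_is_surj surj_f_inv_f)
    finally show "conj_act \<phi> (\<lambda>f. \<Sum>j\<in>UNIV. of_int (A $ i $ j) * H j f) y = H i y"
      by (simp add: T_def)
  qed
qed

lemma Dv_ne0: assumes "x m1 \<noteq> 0" shows "Dv x \<noteq> (\<lambda>f. 0 :: ('k::field_char_0,'n::finite) laurent)"
proof
  assume "Dv x = (\<lambda>f. 0)"
  then have "x m1 * lvar m1 = 0" by (metis Dv_lvar)
  then have "lvar_inv m1 * (lvar m1 * x m1) = 0" by (simp add: mult.commute)
  then show False using assms by (simp add: lvar_inv_mult2)
qed

lemma sgl_ne0: "(c::'k::zero) \<noteq> 0 \<Longrightarrow> sgl b c \<noteq> 0"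
  by (metis lookup_single_eq lookup_zero)

lemma Dv_ex_ne0: assumes "Dv x \<noteq> (\<lambda>f. 0 :: ('k::field_char_0,'n::finite) laurent)"
  shows "\<exists>m b. b \<in> kys (x m)"
proof (rule ccontr)
  assume "\<not> ?thesis"
  then have "\<And>m. x m = 0" using keys_eq_empty by blast
  then have "Dv x = (\<lambda>f. 0)" by (simp add: Dv_def fun_eq_iff)
  then show False using assms by simp
qed

lemma Dv_const_single: "Dv (\<lambda>j. lconst (\<kappa> j)) (sgl c w) = lconst (vp \<kappa> c) * (sgl c w :: ('k::field_char_0,'n::finite) laurent)"
  by (rule poly_mapping_eqI) (simp add: lk_Dv_const lk_lconst_mult lookup_single when_def)

context
  fixes \<sigma> :: "('k::field_char_0,'n::finite) LL \<Rightarrow> ('k,'n) LL" and \<kappa> :: "'n \<Rightarrow> 'n \<Rightarrow> 'k"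
  assumes la: "lie_aut \<sigma>" and sk: "\<And>i. \<sigma> (H i) = Dv (\<lambda>j. lconst (\<kappa> i j))"
begin

lemma fwd: "\<exists>b. \<forall>i. vp (\<kappa> i) c = of_int (b $ i)"
proof -
  define Y where "Y = (Dv (\<lambda>m. sgl c 1) :: ('k,'n) LL)"
  have YD: "Y \<in> Der" by (simp add: Y_def Dv_Der)
  obtain X where XD: "X \<in> Der" and XY: "\<sigma> X = Y" using sig_surj[OF la YD] by blast
  define x where "x m = lvar_inv m * X (lvar m)" for m
  have Xx: "X = Dv x" unfolding x_def by (rule Der_repr[OF XD])
  have eq: "H i (x m) = lconst (vp (\<kappa> i) c) * x m" for i m
  proof -
    have "\<sigma> (lie_bracket (H i) X) = lie_bracket (\<sigma> (H i)) Y"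
      using sig_br[OF la H_Der XD] XY by simp
    also have "\<dots> = Dv (\<lambda>m. lconst (vp (\<kappa> i) c) * sgl c 1)"
      unfolding sk Y_def br_const Dv_const_single ..
    also have "\<dots> = (\<lambda>f. lconst (vp (\<kappa> i) c) * Y f)" unfolding Y_def Dv_scal ..
    also have "\<dots> = \<sigma> (\<lambda>f. lconst (vp (\<kappa> i) c) * X f)" using sig_scal[OF la XD] XY by simp
    finally have "lie_bracket (H i) X = (\<lambda>f. lconst (vp (\<kappa> i) c) * X f)"
      by (rule sig_inj[OF la bracket_Der[OF H_Der XD] Der_fscal[OF XD]])
    then have "Dv (\<lambda>m. H i (x m)) = Dv (\<lambda>m. lconst (vp (\<kappa> i) c) * x m)"
      unfolding Xx br_H_gen Dv_scal .
    then show ?thesis by (metis Dv_inj)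
  qed
  have "X \<noteq> (\<lambda>f. 0)"
  proof
    assume "X = (\<lambda>f. 0)"
    then have "Y = (\<lambda>f. 0)" using XY sig_zero[OF la] by simp
    moreover have "Y \<noteq> (\<lambda>f. 0)" unfolding Y_def by (rule Dv_ne0) (simp add: sgl_ne0)
    ultimately show False by simp
  qed
  then obtain m b where b: "b \<in> kys (x m)" using Dv_ex_ne0 Xx by blast
  have "vp (\<kappa> i) c = of_int (b $ i)" for i
  proof -
    have "lk (H i (x m)) b = lk (lconst (vp (\<kappa> i) c) * x m) b" by (simp add: eq)
    then have "of_int (b $ i) * lk (x m) b = vp (\<kappa> i) c * lk (x m) b" by (simp add: lk_H lk_lconst_mult)
    then show ?thesis using b by (simp add: in_keys_iff)
  qed
  then show ?thesis by blast
qed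

lemma bwd: "\<exists>c. \<forall>i. vp (\<kappa> i) c = of_int (b $ i)"
proof -
  define Z where "Z = (Dv (\<lambda>m. sgl b 1) :: ('k,'n) LL)"
  have ZD: "Z \<in> Der" by (simp add: Z_def Dv_Der)
  define Y where "Y = \<sigma> Z"
  have YD: "Y \<in> Der" unfolding Y_def by (rule sig_Der[OF la ZD])
  define y where "y m = lvar_inv m * Y (lvar m)" for m
  have Yy: "Y = Dv y" unfolding y_def by (rule Der_repr[OF YD])
  have eq: "Dv (\<lambda>j. lconst (\<kappa> i j)) (y m) = lconst (of_int (b $ i)) * y m" for i m
  proof -
    have "Dv (\<lambda>m. Dv (\<lambda>j. lconst (\<kappa> i j)) (y m)) = lie_bracket (\<sigma> (H i)) Y"
      unfolding sk Yy br_const ..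
    also have "\<dots> = \<sigma> (lie_bracket (H i) Z)" unfolding Y_def by (rule sig_br[OF la H_Der ZD, symmetric])
    also have "\<dots> = \<sigma> (\<lambda>f. lconst (of_int (b $ i)) * Z f)" unfolding Z_def br_H_single ..
    also have "\<dots> = (\<lambda>f. lconst (of_int (b $ i)) * Y f)" unfolding Y_def by (rule sig_scal[OF la ZD])
    also have "\<dots> = Dv (\<lambda>m. lconst (of_int (b $ i)) * y m)" unfolding Yy Dv_scal ..
    finally show ?thesis by (metis Dv_inj)
  qed
  have "Y \<noteq> (\<lambda>f. 0)"
  proof
    assume "Y = (\<lambda>f. 0)"
    then have "\<sigma> Z = \<sigma> (\<lambda>f. 0)" using sig_zero[OF la] by (simp add: Y_def)
    then have "Z = (\<lambda>f. 0)" by (rule sig_inj[OF la ZD Der_fzero])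
    moreover have "Z \<noteq> (\<lambda>f. 0)" unfolding Z_def by (rule Dv_ne0) (simp add: sgl_ne0)
    ultimately show False by simp
  qed
  then obtain m c where c: "c \<in> kys (y m)" using Dv_ex_ne0 Yy by blast
  have "vp (\<kappa> i) c = of_int (b $ i)" for i
  proof -
    have "lk (Dv (\<lambda>j. lconst (\<kappa> i j)) (y m)) c = lk (lconst (of_int (b $ i)) * y m) c" by (simp add: eq)
    then have "vp (\<kappa> i) c * lk (y m) c = of_int (b $ i) * lk (y m) c" by (simp add: lk_Dv_const lk_lconst_mult)
    then show ?thesis using c by (simp add: in_keys_iff)
  qed
  then show ?thesis by blast
qed

end

theorem lemma2p10:
  fixes \<sigma> :: "(('k::field_char_0,'n::finite) laurent \<Rightarrow> ('k,'n) laurent) \<Rightarrow> (('k,'n) laurent \<Rightarrow> ('k,'n) laurent)"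
  assumes "lie_aut \<sigma>"
  shows "\<exists>A :: int^'n^'n. invertible A
           \<and> (\<forall>i. \<sigma> (H i) = (\<lambda>f. \<Sum>j\<in>UNIV. of_int (A $ i $ j) * H j f))
           \<and> (\<exists>\<phi> :: (('k,'n) laurent \<Rightarrow> ('k,'n) laurent). is_sigmaA A \<phi>)
           \<and> (\<forall>\<phi>. is_sigmaA A \<phi> \<longrightarrow> (\<forall>i. conj_act \<phi> (\<sigma> (H i)) = H i))"
proof -
  have "\<forall>i. \<exists>\<kappa>. \<sigma> (H i) = Dv (\<lambda>j. lconst (\<kappa> j))" using cart[OF assms] by blast
  then obtain \<kappa> where sk: "\<And>i. \<sigma> (H i) = Dv (\<lambda>j. lconst (\<kappa> i j))" by metis
  have "\<forall>j. \<exists>b. \<forall>i. vp (\<kappa> i) (axis j 1) = of_int (b $ i)" using fwd[OF assms sk] by blast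
  then obtain bb where bb: "\<And>j i. vp (\<kappa> i) (axis j 1) = of_int (bb j $ i)" by metis
  define A :: "int^'n^'n" where "A = (\<chi> i j. bb j $ i)"
  have kA: "\<kappa> i j = of_int (A $ i $ j)" for i j
  proof -
    have "vp (\<kappa> i) (axis j 1) = of_int (bb j $ i)" by (rule bb)
    then show ?thesis by (simp add: A_def vp_axis)
  qed
  have vpA: "vp (\<kappa> i) c = of_int ((A *v c) $ i)" for i c
    by (simp add: vp_def matrix_vector_mult_def kA)
  have "\<exists>c. A *v c = b" for b
  proof -
    obtain c where "\<And>i. vp (\<kappa> i) c = of_int (b $ i)" using bwd[OF assms sk] by blast
    then have "\<And>i. (A *v c) $ i = b $ i" by (simp add: vpA)
    then show ?thesis by (auto simp: vec_eq_iff)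
  qed
  then have "\<forall>k. \<exists>c. A *v c = axis k 1" by blast
  then obtain cs where cs: "\<And>k. A *v cs k = axis k 1" by metis
  define C :: "int^'n^'n" where "C = (\<chi> i k. cs k $ i)"
  have AC: "A ** C = mat 1"
  proof -
    have "(A ** C) $ i $ k = mat 1 $ i $ k" for i k
    proof -
      have "(A ** C) $ i $ k = (A *v cs k) $ i" by (simp add: matrix_matrix_mult_def matrix_vector_mult_def C_def)
      then show ?thesis by (simp add: cs axis_def mat_def)
    qed
    then show ?thesis by (simp add: vec_eq_iff)
  qed
  define R :: "int^'n^'n \<Rightarrow> real^'n^'n" where "R X = (\<chi> i j. real_of_int (X $ i $ j))" for X
  have Rm: "R (X ** Y) = R X ** R Y" for X Y by (simp add: R_def vec_eq_iff matrix_matrix_mult_def)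
  have R1: "R (mat 1) = mat 1" by (simp add: R_def vec_eq_iff mat_def)
  have Rinj: "R X = R Y \<Longrightarrow> X = Y" for X Y by (simp add: R_def vec_eq_iff)
  have "R A ** R C = mat 1" using AC by (simp add: Rm[symmetric] R1)
  then have "R C ** R A = mat 1" by (simp add: matrix_left_right_inverse)
  then have CA: "C ** A = mat 1" by (intro Rinj) (simp add: Rm R1)
  have inv: "invertible A" unfolding invertible_def using AC CA by blast
  have sH: "\<sigma> (H i) = (\<lambda>f. \<Sum>j\<in>UNIV. of_int (A $ i $ j) * H j f)" for i
    by (simp add: sk Dv_def kA of_int_lconst fun_eq_iff)
  show ?thesis
  proof (intro exI[of _ A] conjI allI impI)
    show "invertible A" by (rule inv)
    show "\<sigma> (H i) = (\<lambda>f. \<Sum>j\<in>UNIV. of_int (A $ i $ j) * H j f)" for i by (rule sH)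
    show "\<exists>\<phi> :: (('k,'n) laurent \<Rightarrow> ('k,'n) laurent). is_sigmaA A \<phi>"
      using sigA_exists[OF AC CA] by blast
    show "conj_act \<phi> (\<sigma> (H i)) = H i" if "is_sigmaA A \<phi>" for \<phi> i
      unfolding sH by (rule sigA_conj[OF that])
  qed
qed

end
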